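(* For every $n\ge1$, the number $r_{n+1}$ of rooted duplication trees with $n+1$ leaves equals the number $\sigma_n$ of counter arrays of length $n$.
   Context: A counter array of length $n$ is an integer array $(a_1,\dots,a_n)$ with $1\le a_i\le i$ for all $i$ and $a_{i+1}\ge a_i-1$ for all $1\le i<n$; $\sigma_n$ denotes the number of such arrays. Rooted duplication trees: start with the ordered array $(g)$ consisting of a single gene (the root). A tandem-duplication event applied to a current ordered array of genes $(g_1,\dots,g_m)$ chooses a contiguous block $g_i,\dots,g_{i+\ell-1}$, creates for each $g_j$ in the block two new genes $\mathrm{lc}(g_j)$, $\mathrm{rc}(g_j)$ (its left and right child), and replaces the block by $\mathrm{lc}(g_i),\dots,\mathrm{lc}(g_{i+\ell-1}),\mathrm{rc}(g_i),\dots,\mathrm{rc}(g_{i+\ell-1})$. A rooted duplication tree is a rooted binary tree (each internal node has a left and a right child) with the linear order on its leaves, arising from the single root by a finite sequence of such events (leaves are the genes of the final array, in that array's order). Trees are identified if isomorphic as rooted binary trees preserving left/right children and leaf order; $r_m$ counts the classes with $m$ leaves. *)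

theory Defs
  imports Main
begin

text \<open>A counter array of length n, stored 0-indexed as a list a with a!i = a_(i+1):
  1 <= a_i <= i and a_(i+1) >= a_i - 1 (written as a_(i+1) + 1 >= a_i to avoid
  truncated subtraction).\<close>

definition counter_array :: "nat \<Rightarrow> nat list \<Rightarrow> bool" where
  "counter_array n a \<longleftrightarrow> length a = n
     \<and> (\<forall>i<n. 1 \<le> a ! i \<and> a ! i \<le> i + 1)
     \<and> (\<forall>i. i + 1 < n \<longrightarrow> a ! i \<le> a ! (i + 1) + 1)"

definition sigma :: "nat \<Rightarrow> nat" where
  "sigma n = card {a. counter_array n a}"

text \<open>Genes are named canonically by their path from the root in the duplication
  tree (False = left child, True = right child): the root is [], lc g = g @ [False],
  rc g = g @ [True].\<close>

definition dup_event :: "nat \<Rightarrow> nat \<Rightarrow> bool list list \<Rightarrow> bool list list" where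
  "dup_event i l xs =
     (let blk = take l (drop i xs) in
      take i xs @ map (\<lambda>g. g @ [False]) blk @ map (\<lambda>g. g @ [True]) blk @ drop (i + l) xs)"

inductive dup_reachable :: "bool list list \<Rightarrow> bool" where
  init: "dup_reachable [[]]"
| step: "dup_reachable xs \<Longrightarrow> 1 \<le> l \<Longrightarrow> i + l \<le> length xs \<Longrightarrow>
           dup_reachable (dup_event i l xs)"

text \<open>With canonical path names, the tree (nodes = all prefixes of the leaf paths)
  together with the leaf order is exactly determined by the final array, and two
  such trees are isomorphic (preserving left/right children and leaf order) iff
  their final arrays are equal.  Hence isomorphism classes of rooted duplication
  trees with m leaves correspond to reachable arrays of length m.\<close>

definition r_dup :: "nat \<Rightarrow> nat" where
  "r_dup m = card {xs. dup_reachable xs \<and> length xs = m}"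

end

theory Submission
  imports Defs
begin


fun tot :: "(nat \<times> nat) list \<Rightarrow> nat" where
  "tot [] = 0" | "tot ((i,l)#es) = l + tot es"
fun lastp :: "(nat \<times> nat) list \<Rightarrow> nat" where
  "lastp [] = 0" | "lastp ((i,l)#es) = i"
fun valid :: "(nat \<times> nat) list \<Rightarrow> bool" where
  "valid [] = True"
| "valid ((i,l)#es) = (valid es \<and> 1 \<le> l \<and> i + l \<le> Suc (tot es) \<and> lastp es < i + l)"
fun build :: "(nat \<times> nat) list \<Rightarrow> bool list list" where
  "build [] = [[]]" | "build ((i,l)#es) = dup_event i l (build es)"
fun run :: "nat \<Rightarrow> nat \<Rightarrow> nat list" where
  "run i 0 = []" | "run i (Suc l) = run (Suc i) l @ [Suc i]"
fun enc :: "(nat \<times> nat) list \<Rightarrow> nat list" where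
  "enc [] = []" | "enc ((i,l)#es) = enc es @ run i l"
fun ins :: "nat \<times> nat \<Rightarrow> (nat \<times> nat) list \<Rightarrow> (nat \<times> nat) list" where
  "ins (i,l) [] = [(i,l)]"
| "ins (i,l) ((j,k)#es) = (if j < i + l then (i,l)#(j,k)#es else (j+l,k) # ins (i,l) es)"

lemma dup_split:
  assumes "length P = i" "length X = l"
  shows "dup_event i l (P @ X @ R) = P @ map (\<lambda>g. g @ [False]) X @ map (\<lambda>g. g @ [True]) X @ R"
  using assms by (simp add: dup_event_def)

lemma decomp3:
  assumes "i + l \<le> length xs"
  obtains P X S where "xs = P @ X @ S" "length P = i" "length X = l"
proof -
  have "xs = take i xs @ take l (drop i xs) @ drop (i+l) xs"
    by (metis append_take_drop_id drop_drop add.commute)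
  then show ?thesis using that assms by (metis length_take length_drop min_absorb2 le_add1 le_diff_conv2 add_leE add.commute)
qed

lemma length_dup:
  assumes "i + l \<le> length xs" shows "length (dup_event i l xs) = length xs + l"
proof -
  obtain P X S where "xs = P @ X @ S" "length P = i" "length X = l" using decomp3 assms by blast
  then show ?thesis by (simp add: dup_split)
qed

lemma length_build: "valid es \<Longrightarrow> length (build es) = Suc (tot es)"
  by (induction es rule: valid.induct) (auto simp: length_dup)

lemma commute:
  assumes "i + l \<le> j" "j + k \<le> length xs"
  shows "dup_event i l (dup_event j k xs) = dup_event (j + l) k (dup_event i l xs)"
proof -
  obtain Q Y S where q: "xs = Q @ Y @ S" "length Q = j" "length Y = k" using decomp3 assms(2) by blast
  obtain P X M where p: "Q = P @ X @ M" "length P = i" "length X = l"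
    using decomp3[of i l Q] assms(1) q(2) by blast
  have "dup_event j k xs = P @ X @ (M @ map (\<lambda>g. g @ [False]) Y @ map (\<lambda>g. g @ [True]) Y @ S)"
    using q p dup_split[of Q j Y k S] by simp
  then have 1: "dup_event i l (dup_event j k xs) = P @ map (\<lambda>g. g @ [False]) X @ map (\<lambda>g. g @ [True]) X @ M @ map (\<lambda>g. g @ [False]) Y @ map (\<lambda>g. g @ [True]) Y @ S"
    using p by (simp add: dup_split)
  have "dup_event i l xs = (P @ map (\<lambda>g. g @ [False]) X @ map (\<lambda>g. g @ [True]) X @ M) @ Y @ S"
    using q p dup_split[of P i X l "M @ Y @ S"] by simp
  then have 2: "dup_event (j+l) k (dup_event i l xs) = (P @ map (\<lambda>g. g @ [False]) X @ map (\<lambda>g. g @ [True]) X @ M) @ map (\<lambda>g. g @ [False]) Y @ map (\<lambda>g. g @ [True]) Y @ S"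
    using p q dup_split[of "P @ map (\<lambda>g. g @ [False]) X @ map (\<lambda>g. g @ [True]) X @ M" "j+l" Y k S] by simp
  show ?thesis using 1 2 by simp
qed

lemma ins_tot: "tot (ins (i,l) es) = l + tot es"
  by (induction es) auto

lemma ins_lastp: "lastp (ins (i,l) es) = i \<or> lastp (ins (i,l) es) = lastp es + l"
  by (cases es) auto

lemma ins_build: "valid es \<Longrightarrow> i + l \<le> Suc (tot es) \<Longrightarrow> build (ins (i,l) es) = dup_event i l (build es)"
proof (induction es)
  case Nil then show ?case by simp
next
  case (Cons e es)
  obtain j k where e: "e = (j,k)" by fastforce
  show ?case
  proof (cases "j < i + l")
    case True then show ?thesis using e by simp
  next
    case False
    then have "i + l \<le> Suc (tot es)" using Cons.prems e by auto
    then have "build (ins (i,l) es) = dup_event i l (build es)" using Cons by (simp add: e)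
    moreover have "j + k \<le> length (build es)" using Cons.prems e length_build by auto
    ultimately show ?thesis using False e commute[of i l j k "build es"] by simp
  qed
qed

lemma ins_valid: "valid es \<Longrightarrow> 1 \<le> l \<Longrightarrow> i + l \<le> Suc (tot es) \<Longrightarrow> valid (ins (i,l) es)"
proof (induction es)
  case Nil then show ?case by simp
next
  case (Cons e es)
  obtain j k where e: "e = (j,k)" by fastforce
  show ?case
  proof (cases "j < i + l")
    case True then show ?thesis using e Cons.prems by simp
  next
    case False
    then have "i + l \<le> Suc (tot es)" using Cons.prems e by auto
    then have v: "valid (ins (i,l) es)" using Cons by (simp add: e)
    have "lastp (ins (i,l) es) < j + l + k" using ins_lastp[of i l es] False Cons.prems e by auto
    then show ?thesis using False e v Cons.prems ins_tot[of i l es] by auto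
  qed
qed

lemma reach_valid: "dup_reachable xs \<Longrightarrow> \<exists>es. valid es \<and> build es = xs"
proof (induction rule: dup_reachable.induct)
  case init then show ?case by (intro exI[of _ "[]"]) simp
next
  case (step xs l i)
  then obtain es where "valid es" "build es = xs" by blast
  then show ?case using step ins_valid[of es l i] ins_build[of es i l] length_build[of es] by auto
qed

lemma valid_reach: "valid es \<Longrightarrow> dup_reachable (build es)"
  by (induction es rule: valid.induct) (auto intro: dup_reachable.step dup_reachable.init simp: length_build)



lemma length_run[simp]: "length (run i l) = l"
  by (induction l arbitrary: i) auto

lemma length_enc: "length (enc es) = tot es"
  by (induction es rule: enc.induct) auto

lemma last_run: "1 \<le> l \<Longrightarrow> last (run i l) = Suc i"
  by (cases l) auto

lemma last_enc: assumes "valid es" "es \<noteq> []" shows "last (enc es) = Suc (lastp es)"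
  using assms
proof (cases es rule: valid.cases)
  case (2 i l es')
  then have "run i l \<noteq> []" using length_run[of i l] by (metis list.size(3) not_one_le_zero assms(1) valid.simps(2))
  then show ?thesis using 2 assms last_run[of l i] by auto
qed auto

lemma tot_zero: "valid es \<Longrightarrow> tot es = 0 \<longleftrightarrow> es = []"
  by (cases es rule: valid.cases) auto

lemma run_split: "run i (k + m) = run (i + k) m @ run i k"
  by (induction k arbitrary: i) auto

lemma counter_snoc:
  "counter_array (Suc n) (a @ [v]) \<longleftrightarrow>
     counter_array n a \<and> 1 \<le> v \<and> v \<le> Suc n \<and> (0 < n \<longrightarrow> last a \<le> v + 1)"
proof
  assume H: "counter_array (Suc n) (a @ [v])"
  then have len: "length a = n" by (simp add: counter_array_def)
  have A: "\<forall>i<Suc n. 1 \<le> (a@[v]) ! i \<and> (a@[v]) ! i \<le> i + 1"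
    and B: "\<forall>i. i + 1 < Suc n \<longrightarrow> (a@[v]) ! i \<le> (a@[v]) ! (i + 1) + 1"
    using H by (auto simp: counter_array_def)
  have "counter_array n a"
    unfolding counter_array_def
  proof (intro conjI allI impI)
    show "length a = n" by fact
    fix i assume "i < n"
    then show "1 \<le> a ! i" "a ! i \<le> i + 1" using A[rule_format, of i] len by (auto simp: nth_append)
  next
    fix i assume "i + 1 < n"
    then show "a ! i \<le> a ! (i + 1) + 1" using B[rule_format, of i] len by (auto simp: nth_append)
  qed
  moreover have "1 \<le> v \<and> v \<le> Suc n" using A[rule_format, of n] len by auto
  moreover have "0 < n \<longrightarrow> last a \<le> v + 1"
  proof
    assume "0 < n"
    then have "last a = a ! (n - 1)" using len last_conv_nth[of a] by fastforce
    then show "last a \<le> v + 1" using B[rule_format, of "n - 1"] len \<open>0 < n\<close> by (auto simp: nth_append)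
  qed
  ultimately show "counter_array n a \<and> 1 \<le> v \<and> v \<le> Suc n \<and> (0 < n \<longrightarrow> last a \<le> v + 1)" by blast
next
  assume H: "counter_array n a \<and> 1 \<le> v \<and> v \<le> Suc n \<and> (0 < n \<longrightarrow> last a \<le> v + 1)"
  then have len: "length a = n" and A: "\<forall>i<n. 1 \<le> a ! i \<and> a ! i \<le> i + 1"
    and B: "\<forall>i. i + 1 < n \<longrightarrow> a ! i \<le> a ! (i + 1) + 1" by (auto simp: counter_array_def)
  show "counter_array (Suc n) (a @ [v])"
    unfolding counter_array_def
  proof (intro conjI allI impI)
    show "length (a @ [v]) = Suc n" using len by simp
    fix i assume i: "i < Suc n"
    show "1 \<le> (a @ [v]) ! i" "(a @ [v]) ! i \<le> i + 1"
      using A[rule_format, of i] H len i by (auto simp: nth_append)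
  next
    fix i assume i: "i + 1 < Suc n"
    show "(a @ [v]) ! i \<le> (a @ [v]) ! (i + 1) + 1"
    proof (cases "i + 1 < n")
      case True then show ?thesis using B len by (auto simp: nth_append)
    next
      case False
      then have "i = n - 1" "0 < n" using i by auto
      moreover have "last a = a ! (n - 1)" using len last_conv_nth[of a] \<open>0 < n\<close> by fastforce
      ultimately show ?thesis using H len by (auto simp: nth_append)
    qed
  qed
qed


lemma run_ne: "1 \<le> l \<Longrightarrow> run i l \<noteq> []"
  using length_run[of i l] by (metis list.size(3) not_one_le_zero)

lemma run_ca:
  assumes "counter_array (tot es) (enc es)" "valid es"
  shows "1 \<le> l \<Longrightarrow> i + l \<le> Suc (tot es) \<Longrightarrow> lastp es < i + l \<Longrightarrow>
         counter_array (tot es + l) (enc es @ run i l)"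
proof (induction l arbitrary: i)
  case 0 then show ?case by simp
next
  case (Suc l')
  show ?case
  proof (cases "l' = 0")
    case True
    have "0 < tot es \<longrightarrow> last (enc es) \<le> Suc i + 1"
    proof
      assume "0 < tot es"
      then have "es \<noteq> []" by auto
      then show "last (enc es) \<le> Suc i + 1" using last_enc[OF assms(2)] Suc.prems True by auto
    qed
    then have "counter_array (Suc (tot es)) (enc es @ [Suc i])"
      using counter_snoc[of "tot es" "enc es" "Suc i"] assms Suc.prems True by auto
    then show ?thesis using True by simp
  next
    case False
    then have IH: "counter_array (tot es + l') (enc es @ run (Suc i) l')"
      using Suc by auto
    have "last (enc es @ run (Suc i) l') = Suc (Suc i)"
      using last_run[of l' "Suc i"] run_ne[of l' "Suc i"] False by simp
    then have "counter_array (Suc (tot es + l')) ((enc es @ run (Suc i) l') @ [Suc i])"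
      using counter_snoc[of "tot es + l'" "enc es @ run (Suc i) l'" "Suc i"] IH Suc.prems by auto
    then show ?thesis by simp
  qed
qed

lemma enc_ca: "valid es \<Longrightarrow> counter_array (tot es) (enc es)"
proof (induction es rule: valid.induct)
  case 1 then show ?case by (simp add: counter_array_def)
next
  case (2 i l es)
  then show ?case using run_ca[of es l i] by (simp add: add.commute)
qed

lemma ca_enc: "counter_array n a \<Longrightarrow> \<exists>es. valid es \<and> tot es = n \<and> enc es = a"
proof (induction n arbitrary: a)
  case 0 then show ?case by (intro exI[of _ "[]"]) (simp add: counter_array_def)
next
  case (Suc n)
  have "length a = Suc n" using Suc.prems by (simp add: counter_array_def)
  then obtain a' v where a: "a = a' @ [v]" by (metis length_Suc_conv_rev)
  then have H: "counter_array n a'" "1 \<le> v" "v \<le> Suc n" "0 < n \<longrightarrow> last a' \<le> v + 1"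
    using Suc.prems counter_snoc by auto
  obtain es' where es': "valid es'" "tot es' = n" "enc es' = a'" using Suc.IH H(1) by blast
  show ?case
  proof (cases es')
    case Nil
    then have "n = 0" using es' by simp
    then have "v = 1" using H by simp
    show ?thesis
      by (intro exI[of _ "[(0,1)]"]) (use es' Nil in \<open>simp add: a \<open>v = 1\<close> \<open>n = 0\<close>\<close>)
  next
    case (Cons e r)
    obtain i l where e: "e = (i,l)" by fastforce
    have vr: "valid r" "1 \<le> l" "i + l \<le> Suc (tot r)" "lastp r < i + l" using es' Cons e by auto
    have "0 < n" using es' Cons e vr by auto
    have la: "last a' = Suc i" using last_enc[OF es'(1)] Cons e es' by simp
    show ?thesis
    proof (cases "v = i")
      case True
      then have "1 \<le> i" using H by simp
      have "run (i - 1) (Suc l) = run i l @ [i]" using \<open>1 \<le> i\<close> by simp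
      then have "enc ((i - 1, Suc l) # r) = a"
        using a es' Cons e True by simp
      moreover have "valid ((i - 1, Suc l) # r)" using vr \<open>1 \<le> i\<close> by auto
      moreover have "tot ((i - 1, Suc l) # r) = Suc n" using es' Cons e by simp
      ultimately show ?thesis by blast
    next
      case False
      then have "Suc i \<le> v" using H(4) \<open>0 < n\<close> la by simp
      have "enc ((v - 1, 1) # es') = a" using a es' \<open>1 \<le> v\<close> by simp
      moreover have "valid ((v - 1, 1) # es')" using es' H \<open>Suc i \<le> v\<close> Cons e by auto
      moreover have "tot ((v - 1, 1) # es') = Suc n" using es' by simp
      ultimately show ?thesis by blast
    qed
  qed
qed

lemma enc_inj_aux:
  assumes "valid ((i1,l1)#r1)" "valid ((i2,l2)#r2)"
    "enc r1 @ run i1 l1 = enc r2 @ run i2 l2" "l1 \<le> l2"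
  shows "l1 = l2 \<and> i1 = i2"
proof -
  have v1: "valid r1" "1 \<le> l1" "lastp r1 < i1 + l1" using assms by auto
  have "run i2 l2 = run (i2 + l1) (l2 - l1) @ run i2 l1"
    using run_split[of i2 l1 "l2 - l1"] assms(4) by simp
  then have eq: "(enc r2 @ run (i2 + l1) (l2 - l1)) @ run i2 l1 = enc r1 @ run i1 l1"
    using assms(3) by simp
  moreover have "length (run i2 l1) = length (run i1 l1)" by simp
  ultimately have "enc r2 @ run (i2 + l1) (l2 - l1) = enc r1 \<and> run i2 l1 = run i1 l1"
    using append_eq_append_conv by blast
  then have "run i2 l1 = run i1 l1" "enc r2 @ run (i2 + l1) (l2 - l1) = enc r1" by blast+
  then have ii: "i1 = i2" using last_run[of l1 i1] last_run[of l1 i2] v1 by simp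
  have "l1 = l2"
  proof (rule ccontr)
    assume "l1 \<noteq> l2"
    then have lt: "l1 < l2" using assms by simp
    have e: "enc r2 @ run (i2 + l1) (l2 - l1) = enc r1" by fact
    have "length (enc r1) \<ge> l2 - l1" using arg_cong[OF e, of length] by simp
    then have "r1 \<noteq> []" using lt by auto
    then have "last (enc r1) = Suc (lastp r1)" using last_enc v1 by blast
    moreover have "last (enc r1) = Suc (i2 + l1)"
      using e[symmetric] last_run[of "l2 - l1" "i2 + l1"] run_ne[of "l2 - l1" "i2 + l1"] lt by simp
    ultimately show False using v1 ii by simp
  qed
  then show ?thesis using ii by simp
qed

lemma enc_inj: "valid es1 \<Longrightarrow> valid es2 \<Longrightarrow> enc es1 = enc es2 \<Longrightarrow> es1 = es2"
proof (induction es1 arbitrary: es2)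
  case Nil
  then have "tot es2 = 0" using length_enc[of es2] by simp
  then show ?case using tot_zero Nil by auto
next
  case (Cons e1 r1)
  obtain i1 l1 where e1: "e1 = (i1,l1)" by fastforce
  have "tot (e1#r1) \<noteq> 0" using tot_zero[of "e1#r1"] Cons.prems(1) by simp
  then have "tot es2 \<noteq> 0" using Cons.prems(3) length_enc[of es2] length_enc[of "e1#r1"] by simp
  then obtain i2 l2 r2 where es2: "es2 = (i2,l2)#r2" by (metis tot.simps(1) list.exhaust prod.exhaust)
  have eq: "enc r1 @ run i1 l1 = enc r2 @ run i2 l2" using Cons.prems e1 es2 by simp
  have "l1 = l2 \<and> i1 = i2"
  proof (cases "l1 \<le> l2")
    case True then show ?thesis using enc_inj_aux[OF _ _ eq] Cons.prems e1 es2 by auto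
  next
    case False then show ?thesis using enc_inj_aux[OF _ _ eq[symmetric]] Cons.prems e1 es2 by auto
  qed
  then have "enc r1 = enc r2" using eq by simp
  then have "r1 = r2" using Cons e1 es2 by auto
  then show ?case using e1 es2 \<open>l1 = l2 \<and> i1 = i2\<close> by simp
qed



definition pf :: "bool list set \<Rightarrow> bool" where
  "pf A \<longleftrightarrow> (\<forall>a\<in>A. \<forall>b\<in>A. \<forall>t. b = a @ t \<longrightarrow> t = [])"

lemma h1:
  assumes "pf A" "a \<in> A" "g \<in> A" "g @ [c] = a @ t"
  shows "t = [] \<or> a = g"
proof (cases t rule: rev_cases)
  case Nil then show ?thesis by simp
next
  case (snoc t' x)
  then have "g = a @ t'" using assms(4) by simp
  then have "t' = []" using assms unfolding pf_def by blast
  then show ?thesis using \<open>g = a @ t'\<close> by simp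
qed

lemma h2:
  assumes "pf A" "g \<in> A" "b \<in> A" "b = (g @ [c]) @ t"
  shows False
proof -
  have "b = g @ (c # t)" using assms(4) by simp
  then show False using assms(1-3) unfolding pf_def by blast
qed

lemma h3:
  assumes "pf A" "g \<in> A" "h \<in> A" "h @ [d] = (g @ [c]) @ t"
  shows "t = []"
proof (cases t rule: rev_cases)
  case Nil then show ?thesis by simp
next
  case (snoc t' x)
  then have "h = g @ (c # t')" using assms(4) by simp
  then show ?thesis using assms unfolding pf_def by blast
qed

lemma inv_dup:
  assumes d: "distinct xs" and p: "pf (set xs)" and il: "i + l \<le> length xs"
  shows "distinct (dup_event i l xs) \<and> pf (set (dup_event i l xs))"
proof -
  obtain P X S where xs: "xs = P @ X @ S" "length P = i" "length X = l" using decomp3 il by blast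
  have ys: "dup_event i l xs = P @ map (\<lambda>g. g @ [False]) X @ map (\<lambda>g. g @ [True]) X @ S"
    using dup_split xs by blast
  have QX: "(set P \<union> set S) \<inter> set X = {}" using d xs by auto
  have k3: "\<And>g c. g \<in> set xs \<Longrightarrow> g @ [c] \<notin> set xs"
  proof
    fix g c assume "g \<in> set xs" "g @ [c] \<in> set xs"
    then have "[c] = []" using p unfolding pf_def by blast
    then show False by simp
  qed
  have dist: "distinct (dup_event i l xs)"
  proof -
    have sx: "set P \<subseteq> set xs" "set X \<subseteq> set xs" "set S \<subseteq> set xs" using xs by auto
    have "distinct P" "distinct X" "distinct S" "set P \<inter> set X = {}" "set P \<inter> set S = {}" "set X \<inter> set S = {}"
      using d xs by auto
    moreover have "\<And>g c. g \<in> set X \<Longrightarrow> g @ [c] \<notin> set P" "\<And>g c. g \<in> set X \<Longrightarrow> g @ [c] \<notin> set S"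
      using k3 sx by blast+
    moreover have "inj_on (\<lambda>g. g @ [c]) A" for c A by (simp add: inj_on_def)
    ultimately show ?thesis unfolding ys by (auto simp: distinct_map)
  qed
  have "\<forall>a\<in>set (dup_event i l xs). \<forall>b\<in>set (dup_event i l xs). \<forall>t. b = a @ t \<longrightarrow> t = []"
  proof (intro ballI allI impI)
    fix a b t assume a: "a \<in> set (dup_event i l xs)" and b: "b \<in> set (dup_event i l xs)" and e: "b = a @ t"
    have a': "a \<in> set P \<union> set S \<or> (\<exists>g\<in>set X. \<exists>c. a = g @ [c])" using a ys by auto
    have b': "b \<in> set P \<union> set S \<or> (\<exists>g\<in>set X. \<exists>c. b = g @ [c])" using b ys by auto
    have sx: "set P \<union> set S \<subseteq> set xs" "set X \<subseteq> set xs" using xs by auto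
    show "t = []"
    proof (cases "a \<in> set P \<union> set S")
      case True
      show ?thesis
      proof (cases "b \<in> set P \<union> set S")
        case True
        then show ?thesis using \<open>a \<in> set P \<union> set S\<close> e p sx unfolding pf_def by blast
      next
        case False
        then obtain g c where g: "g \<in> set X" "b = g @ [c]" using b' by blast
        then have "t = [] \<or> a = g" using h1[OF p, of a g c t] True sx e by auto
        then show ?thesis using QX True g by auto
      qed
    next
      case False
      then obtain g c where g: "g \<in> set X" "a = g @ [c]" using a' by blast
      show ?thesis
      proof (cases "b \<in> set P \<union> set S")
        case True
        then show ?thesis using h2[OF p, of g b c t] g sx e by auto
      next
        case False
        then obtain h d where h: "h \<in> set X" "b = h @ [d]" using b' by blast
        then show ?thesis using h3[OF p, of g h d c t] g sx e by auto
      qed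
    qed
  qed
  then show ?thesis using dist unfolding pf_def by blast
qed

lemma inv_build: "valid es \<Longrightarrow> distinct (build es) \<and> pf (set (build es))"
proof (induction es rule: valid.induct)
  case 1 then show ?case by (simp add: pf_def)
next
  case (2 i l es)
  then show ?case using inv_dup[of "build es" i l] length_build[of es] by simp
qed


definition vis :: "bool list list \<Rightarrow> nat \<Rightarrow> nat \<Rightarrow> bool" where
  "vis ys s l \<longleftrightarrow> 1 \<le> l \<and> s + 2*l \<le> length ys \<and>
     (\<forall>j<l. \<exists>g. ys ! (s+j) = g @ [False] \<and> ys ! (s+l+j) = g @ [True])"

lemma nth_dup:
  assumes "length P = i" "length X = l"
  shows "(P @ map (\<lambda>g. g @ [False]) X @ map (\<lambda>g. g @ [True]) X @ S) ! t =
    (if t < i then P ! t else if t < i + l then X ! (t - i) @ [False]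
     else if t < i + 2*l then X ! (t - i - l) @ [True] else S ! (t - i - 2*l))"
  using assms by (auto simp: nth_append mult_2 add.assoc)

lemma vis_dup:
  assumes "i + l \<le> length xs" "1 \<le> l"
  shows "vis (dup_event i l xs) i l"
proof -
  obtain P X S where xs: "xs = P @ X @ S" "length P = i" "length X = l" using decomp3 assms(1) by blast
  have ys: "dup_event i l xs = P @ map (\<lambda>g. g @ [False]) X @ map (\<lambda>g. g @ [True]) X @ S"
    using dup_split xs by blast
  show ?thesis unfolding vis_def
  proof (intro conjI allI impI)
    show "1 \<le> l" by fact
    show "i + 2 * l \<le> length (dup_event i l xs)" using ys xs by simp
    fix j assume "j < l"
    then show "\<exists>g. dup_event i l xs ! (i + j) = g @ [False] \<and> dup_event i l xs ! (i + l + j) = g @ [True]"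
      unfolding ys nth_dup[OF xs(2,3)] by auto
  qed
qed

lemma vis_max: "valid es \<Longrightarrow> vis (build es) s l' \<Longrightarrow> s \<le> lastp es"
proof (induction es arbitrary: s l' rule: valid.induct)
  case 1 then show ?case by (simp add: vis_def)
next
  case (2 i l es)
  let ?xs = "build es"
  have v: "valid es" "1 \<le> l" "i + l \<le> Suc (tot es)" "lastp es < i + l" using "2.prems" by auto
  have il: "i + l \<le> length ?xs" using v length_build by simp
  obtain P X S where xs: "?xs = P @ X @ S" "length P = i" "length X = l" using decomp3 il by blast
  let ?ys = "P @ map (\<lambda>g. g @ [False]) X @ map (\<lambda>g. g @ [True]) X @ S"
  have ys: "build ((i,l)#es) = ?ys" using dup_split xs by simp
  have dist: "distinct ?ys" using inv_build[OF "2.prems"(1)] ys by simp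
  have V: "1 \<le> l'" "s + 2*l' \<le> length ?ys"
     "\<And>j. j < l' \<Longrightarrow> \<exists>g. ?ys ! (s+j) = g @ [False] \<and> ?ys ! (s+l'+j) = g @ [True]"
    using "2.prems"(2) ys unfolding vis_def by auto
  have len: "length ?ys = i + 2*l + length S" using xs by simp
  show ?case
  proof (rule ccontr)
    assume "\<not> s \<le> lastp ((i,l)#es)"
    then have si: "i < s" by simp
    obtain g where g: "?ys ! s = g @ [False]" "?ys ! (s+l') = g @ [True]" using V(3)[of 0] V(1) by auto
    consider "s < i + l" | "i + l \<le> s" "s < i + 2*l" | "i + 2*l \<le> s" by linarith
    then show False
    proof cases
      case 1
      have "?ys ! s = X ! (s - i) @ [False]" using 1 si len V unfolding nth_dup[OF xs(2,3)] by auto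
      then have gx: "g = X ! (s - i)" using g by simp
      have "?ys ! (s + l) = X ! (s - i) @ [True]" using 1 si unfolding nth_dup[OF xs(2,3)] by auto
      then have "?ys ! (s + l) = ?ys ! (s + l')" using g gx by simp
      moreover have "s + l < length ?ys" "s + l' < length ?ys" using 1 len V by auto
      ultimately have "s + l = s + l'" using nth_eq_iff_index_eq[OF dist, of "s+l" "s+l'"] by blast
      then have "l = l'" by simp
      moreover have "i + l - s < l'" using si 1 \<open>l = l'\<close> by simp
      ultimately obtain g' where "?ys ! (s + (i + l - s)) = g' @ [False]" using V(3) by blast
      moreover have "?ys ! (s + (i + l - s)) = X ! 0 @ [True]" using 1 si v unfolding nth_dup[OF xs(2,3)] by auto
      ultimately show False by simp
    next
      case 2
      have "?ys ! s = X ! (s - i - l) @ [True]" using 2 unfolding nth_dup[OF xs(2,3)] by auto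
      then show False using g by simp
    next
      case 3
      have sh: "?ys ! t = ?xs ! (t - l)" if "i + 2*l \<le> t" for t
      proof -
        have "t - (length X + length P + length X) = t - (length P + 2 * length X)" by simp
        then show ?thesis using that xs unfolding nth_dup[OF xs(2,3)] by (auto simp: nth_append)
      qed
      have "vis ?xs (s - l) l'" unfolding vis_def
      proof (intro conjI allI impI)
        show "1 \<le> l'" by fact
        show "s - l + 2 * l' \<le> length ?xs" using V(2) len xs 3 by simp
        fix j assume j: "j < l'"
        obtain h where "?ys ! (s+j) = h @ [False] \<and> ?ys ! (s+l'+j) = h @ [True]" using V(3)[OF j] by blast
        moreover have "?ys ! (s+j) = ?xs ! (s - l + j)" "?ys ! (s+l'+j) = ?xs ! (s - l + l' + j)"
          using sh[of "s+j"] sh[of "s+l'+j"] 3 by (auto simp: algebra_simps)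
        ultimately show "\<exists>g. ?xs ! (s - l + j) = g @ [False] \<and> ?xs ! (s - l + l' + j) = g @ [True]" by auto
      qed
      then have "s - l \<le> lastp es" using "2.IH" v(1) by blast
      then show False using v 3 by simp
    qed
  qed
qed

lemma dup_inj:
  assumes "i + l \<le> length xs" "i + l \<le> length xs'" "length xs = length xs'"
    "dup_event i l xs = dup_event i l xs'"
  shows "xs = xs'"
proof -
  obtain P X S where xs: "xs = P @ X @ S" "length P = i" "length X = l" using decomp3 assms(1) by blast
  obtain P' X' S' where xs': "xs' = P' @ X' @ S'" "length P' = i" "length X' = l" using decomp3 assms(2) by blast
  have e: "P @ map (\<lambda>g. g @ [False]) X @ map (\<lambda>g. g @ [True]) X @ S =
           P' @ map (\<lambda>g. g @ [False]) X' @ map (\<lambda>g. g @ [True]) X' @ S'"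
    using assms(4) xs xs' dup_split[of P i X l S] dup_split[of P' i X' l S'] by simp
  then have "P = P'" "map (\<lambda>g. g @ [False]) X @ map (\<lambda>g. g @ [True]) X @ S =
           map (\<lambda>g. g @ [False]) X' @ map (\<lambda>g. g @ [True]) X' @ S'"
    using xs xs' append_eq_append_conv[of P P'] by auto
  then have m: "map (\<lambda>g. g @ [False]) X = map (\<lambda>g. g @ [False]) X'"
     "map (\<lambda>g. g @ [True]) X @ S = map (\<lambda>g. g @ [True]) X' @ S'"
    using xs xs' append_eq_append_conv[of "map (\<lambda>g. g @ [False]) X" "map (\<lambda>g. g @ [False]) X'"] by auto
  have "inj (\<lambda>g::bool list. g @ [False])" by (simp add: inj_on_def)
  then have "X = X'" using m(1) inj_map_eq_map by blast
  moreover have "S = S'" using m(2) \<open>X = X'\<close> by simp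
  ultimately show ?thesis using xs xs' \<open>P = P'\<close> by simp
qed

lemma build_inj: "valid es1 \<Longrightarrow> valid es2 \<Longrightarrow> build es1 = build es2 \<Longrightarrow> es1 = es2"
proof (induction es1 arbitrary: es2)
  case Nil
  have "length (build es2) = 1" using Nil.prems(3)[symmetric] by simp
  then have "tot es2 = 0" using length_build[of es2] Nil.prems by simp
  then show ?case using tot_zero Nil by auto
next
  case (Cons e1 r1)
  obtain i1 l1 where e1: "e1 = (i1,l1)" by fastforce
  have "tot (e1#r1) \<noteq> 0" using tot_zero[of "e1#r1"] Cons.prems(1) by simp
  then have "tot es2 \<noteq> 0" using Cons.prems length_build[of es2] length_build[of "e1#r1"] by simp
  then obtain e2 r2 where "es2 = e2 # r2" by (cases es2) auto
  moreover obtain i2 l2 where "e2 = (i2,l2)" by fastforce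
  ultimately have es2: "es2 = (i2,l2)#r2" by simp
  let ?ys = "build (e1#r1)"
  have v1: "valid r1" "1 \<le> l1" "i1 + l1 \<le> length (build r1)" using Cons.prems e1 length_build[of r1] by auto
  have v2: "valid r2" "1 \<le> l2" "i2 + l2 \<le> length (build r2)" using Cons.prems es2 length_build[of r2] by auto
  have vis1: "vis ?ys i1 l1" using vis_dup[OF v1(3,2)] e1 by simp
  have vis2: "vis ?ys i2 l2" using vis_dup[OF v2(3,2)] es2 Cons.prems(3) by simp
  have "i2 \<le> i1" using vis_max[OF Cons.prems(1) vis2] e1 by simp
  moreover have "i1 \<le> i2" using vis_max[OF Cons.prems(2)] vis1 Cons.prems(3) es2 by simp
  ultimately have ii: "i1 = i2" by simp
  have A1: "1 \<le> l1" "\<forall>j<l1. \<exists>g. ?ys ! (i1+j) = g @ [False] \<and> ?ys ! (i1+l1+j) = g @ [True]"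
    using vis1 unfolding vis_def by auto
  have A2: "1 \<le> l2" "\<forall>j<l2. \<exists>g. ?ys ! (i1+j) = g @ [False] \<and> ?ys ! (i1+l2+j) = g @ [True]"
    using vis2 ii unfolding vis_def by auto
  obtain g1 where g1: "?ys ! i1 = g1 @ [False]" "?ys ! (i1 + l1) = g1 @ [True]"
    using A1(2)[rule_format, of 0] A1(1) by auto
  obtain g2 where g2: "?ys ! i1 = g2 @ [False]" "?ys ! (i1 + l2) = g2 @ [True]"
    using A2(2)[rule_format, of 0] A2(1) by auto
  have "g1 = g2" using g1 g2 by simp
  moreover have "i1 + l1 < length ?ys" "i1 + l2 < length ?ys" using vis1 vis2 ii unfolding vis_def by auto
  moreover have "distinct ?ys" using inv_build[OF Cons.prems(1)] by simp
  ultimately have "i1 + l1 = i1 + l2" using g1 g2 nth_eq_iff_index_eq[of ?ys "i1+l1" "i1+l2"] by simp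
  then have ll: "l1 = l2" by simp
  have "length (build r1) = length (build r2)"
    using Cons.prems(3) e1 es2 length_dup[OF v1(3)] length_dup[OF v2(3)] ll by simp
  then have "build r1 = build r2"
    using dup_inj[OF v1(3)] v2(3) Cons.prems(3) e1 es2 ii ll by simp
  then have "r1 = r2" using Cons.IH v1(1) v2(1) by blast
  then show ?case using e1 es2 ii ll by simp
qed

theorem main_eq: "r_dup (n + 1) = sigma n"
proof -
  let ?V = "{es. valid es \<and> tot es = n}"
  have "{xs. dup_reachable xs \<and> length xs = n + 1} = build ` ?V"
  proof
    show "{xs. dup_reachable xs \<and> length xs = n + 1} \<subseteq> build ` ?V"
    proof
      fix xs assume "xs \<in> {xs. dup_reachable xs \<and> length xs = n + 1}"
      then obtain es where "valid es" "build es = xs" "length xs = n + 1" using reach_valid by blast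
      then show "xs \<in> build ` ?V" using length_build[of es] by auto
    qed
    show "build ` ?V \<subseteq> {xs. dup_reachable xs \<and> length xs = n + 1}"
      using valid_reach length_build by auto
  qed
  moreover have "inj_on build ?V" using build_inj by (auto simp: inj_on_def)
  ultimately have 1: "r_dup (n + 1) = card ?V" unfolding r_dup_def by (simp add: card_image)
  have "{a. counter_array n a} = enc ` ?V"
  proof
    show "{a. counter_array n a} \<subseteq> enc ` ?V" using ca_enc by blast
    show "enc ` ?V \<subseteq> {a. counter_array n a}" using enc_ca by auto
  qed
  moreover have "inj_on enc ?V" using enc_inj by (auto simp: inj_on_def)
  ultimately have 2: "sigma n = card ?V" unfolding sigma_def by (simp add: card_image)
  show ?thesis using 1 2 by simp
qed


theorem lemma3p2:
  fixes n :: nat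
  assumes "n \<ge> 1"
  shows "r_dup (n + 1) = sigma n"
  using main_eq by blast

end
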